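(* For any sequence of positive integers $A=A(n)\to\infty$ with $A(n)=o(n)$, as $n\to\infty$, \[ \Pr[BINGO(A,A;n,n)]\sim\Bigl(\frac{2\alpha-1}{\pi}\Bigr)^{1/2}A^{(2\alpha-1)/2}n^{-\alpha}. \]
   Context: Fix $\alpha>1$. Consider the Markov chain on $\mathbb N\times\mathbb N$ which from state $(i,j)$ moves to $(i+1,j)$ with probability $i^\alpha/(i^\alpha+j^\alpha)$ and to $(i,j+1)$ with probability $j^\alpha/(i^\alpha+j^\alpha)$. For $a\le c$, $b\le d$, $BINGO(a,b;c,d)$ denotes the event that this chain, started at state $(a,b)$, visits the state $(c,d)$. *)

theory Defs
  imports "HOL-Probability.Probability" "HOL-Library.Landau_Symbols"
begin

definition bingo_step :: "real \<Rightarrow> nat \<times> nat \<Rightarrow> (nat \<times> nat) pmf" where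
  "bingo_step \<alpha> s = (case s of (i, j) \<Rightarrow>
     map_pmf (\<lambda>b. if b then (i + 1, j) else (i, j + 1))
       (bernoulli_pmf (real i powr \<alpha> / (real i powr \<alpha> + real j powr \<alpha>))))"

text \<open>Distribution of the trajectory (X_0, ..., X_N) of the chain started at s,
  as the list [X_N, ..., X_1, X_0].\<close>
fun bingo_traj :: "real \<Rightarrow> nat \<times> nat \<Rightarrow> nat \<Rightarrow> (nat \<times> nat) list pmf" where
  "bingo_traj \<alpha> s 0 = return_pmf [s]"
| "bingo_traj \<alpha> s (Suc N) =
     bind_pmf (bingo_traj \<alpha> s N) (\<lambda>xs. map_pmf (\<lambda>t. t # xs) (bingo_step \<alpha> (hd xs)))"

text \<open>Each step increases the coordinate sum by one, so the chain can only visit (c,d)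
  within its first c+d steps; hence it suffices to look at the trajectory up to time c+d.\<close>
definition bingo_prob :: "real \<Rightarrow> nat \<Rightarrow> nat \<Rightarrow> nat \<Rightarrow> nat \<Rightarrow> real" where
  "bingo_prob \<alpha> a b c d =
     measure_pmf.prob (bingo_traj \<alpha> (a, b) (c + d)) {xs. (c, d) \<in> set xs}"

end

theory Submission
  imports Defs
begin

lemma cauchy_int: "has_bochner_integral lborel (\<lambda>t::real. 1 / (1 + t^2)) pi"
proof -
  have a: "DERIV arctan x :> 1 / (1 + x^2)" for x
      by (rule DERIV_arctan[THEN DERIV_cong]) (simp add: divide_inverse)
  have b: "isCont (\<lambda>t::real. 1 / (1 + t^2)) x" for x
      by (intro continuous_intros) (smt (verit) zero_le_power2)
  have c: "((arctan \<circ> real_of_ereal) \<longlongrightarrow> - (pi/2)) (at_right (- \<infinity>))"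
      by (simp add: tendsto_arctan_at_bot ereal_tendsto_simps)
  have d: "((arctan \<circ> real_of_ereal) \<longlongrightarrow> (pi/2)) (at_left \<infinity>)"
      by (simp add: tendsto_arctan_at_top ereal_tendsto_simps)
  note 1 = interval_integral_FTC_nonneg[of "-\<infinity>" "\<infinity>" arctan "\<lambda>t. 1/(1+t^2)", OF _ a b _ c d]
  have "integrable lborel (\<lambda>t::real. 1 / (1 + t^2))" using 1(1) by (simp add: set_integrable_def)
  moreover have "integral\<^sup>L lborel (\<lambda>t::real. 1 / (1 + t^2)) = pi"
    using 1(2) by (simp add: interval_lebesgue_integral_def set_lebesgue_integral_def)
  ultimately show ?thesis by (simp add: has_bochner_integral_iff)
qed

lemma cauchy_int_scaled:
  assumes w: "w > 0"
  shows "has_bochner_integral lborel (\<lambda>t::real. w / (w^2 + t^2)) pi"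
proof -
  have "has_bochner_integral lborel (\<lambda>x. (1/w) * (1 / (1 + x^2))) ((1/w) * pi)"
    by (rule has_bochner_integral_mult_right[OF cauchy_int])
  moreover have "(\<lambda>x. (1/w) * (1 / (1 + x^2))) = (\<lambda>x. w / (w^2 + (0 + w * x)^2))"
  proof
    fix x :: real
    have p: "1 + x^2 > 0" by (smt (verit) zero_le_power2)
    have "w^2 + (0 + w*x)^2 = w^2 * (1 + x^2)" by (simp add: algebra_simps power2_eq_square)
    then show "(1/w) * (1 / (1 + x^2)) = w / (w^2 + (0 + w * x)^2)"
      using w p by (simp add: power2_eq_square)
  qed
  ultimately have "has_bochner_integral lborel (\<lambda>x. w / (w^2 + (0 + w * x)^2)) (pi /\<^sub>R \<bar>w\<bar>)"
    using w by (simp add: divide_inverse mult.commute)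
  then show ?thesis
    using lborel_has_bochner_integral_real_affine_iff[of w "\<lambda>t. w / (w^2 + t^2)" pi 0] w by simp
qed

lemma Re_inv_w: "w > 0 \<Longrightarrow> Re (1 / (complex_of_real w + \<i> * complex_of_real u)) = w / (w^2 + u^2)"
  by (simp add: Re_divide power2_eq_square)

lemma pf_step: "(A::'a::field) \<noteq> 0 \<Longrightarrow> B \<noteq> 0 \<Longrightarrow> B - A \<noteq> 0 \<Longrightarrow> c / A * (1 / B) = c / (B - A) * (1 / A - 1 / B)"
  by (simp add: field_simps)

lemma pfrac:
  fixes w :: "nat \<Rightarrow> real"
  assumes "finite K" "K \<noteq> {}" "inj_on w K" "\<forall>k\<in>K. w k > 0"
  shows "\<exists>c::nat \<Rightarrow> real. (\<forall>u::real. (\<Prod>k\<in>K. 1 / (complex_of_real (w k) + \<i> * u)) =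
            (\<Sum>k\<in>K. complex_of_real (c k) / (complex_of_real (w k) + \<i> * u)))
         \<and> (card K \<ge> 2 \<longrightarrow> sum c K = 0)"
  using assms
proof (induction K rule: finite_ne_induct)
  case (singleton x)
  then show ?case by (intro exI[of _ "\<lambda>_. 1"]) auto
next
  case (insert j K)
  then obtain c where c: "\<And>u::real. (\<Prod>k\<in>K. 1 / (complex_of_real (w k) + \<i> * u)) =
            (\<Sum>k\<in>K. complex_of_real (c k) / (complex_of_real (w k) + \<i> * u))"
    by (auto simp: inj_on_insert)
  define c' where "c' k = (if k = j then - (\<Sum>k\<in>K. c k / (w j - w k)) else c k / (w j - w k))" for k
  have nz: "complex_of_real (w k) + \<i> * complex_of_real u \<noteq> 0" if "k \<in> insert j K" for k u
  proof
    assume "complex_of_real (w k) + \<i> * complex_of_real u = 0"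
    then have "Re (complex_of_real (w k) + \<i> * complex_of_real u) = 0" by simp
    then show False using insert.prems that by auto
  qed
  have ne: "w j \<noteq> w k" if "k \<in> K" for k
    using insert.prems insert.hyps that by (auto simp: inj_on_def)
  have "(\<Prod>k\<in>insert j K. 1 / (complex_of_real (w k) + \<i> * u)) =
            (\<Sum>k\<in>insert j K. complex_of_real (c' k) / (complex_of_real (w k) + \<i> * u))" for u :: real
  proof -
    let ?z = "\<i> * complex_of_real u"
    have "(\<Prod>k\<in>insert j K. 1 / (complex_of_real (w k) + ?z)) =
       (\<Sum>k\<in>K. complex_of_real (c k) / (complex_of_real (w k) + ?z)) * (1 / (complex_of_real (w j) + ?z))"
      using insert.hyps c[of u] by (simp add: mult.commute)
    also have "\<dots> = (\<Sum>k\<in>K. complex_of_real (c k / (w j - w k)) * (1 / (complex_of_real (w k) + ?z) - 1 / (complex_of_real (w j) + ?z)))"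
      unfolding sum_distrib_right
    proof (rule sum.cong[OF refl])
      fix k assume k: "k \<in> K"
      have 1: "complex_of_real (w k) + ?z \<noteq> 0" "complex_of_real (w j) + ?z \<noteq> 0" using nz k by auto
      have 2: "complex_of_real (w j) - complex_of_real (w k) \<noteq> 0" using ne[OF k] by simp
      show "complex_of_real (c k) / (complex_of_real (w k) + ?z) * (1 / (complex_of_real (w j) + ?z)) =
         complex_of_real (c k / (w j - w k)) * (1 / (complex_of_real (w k) + ?z) - 1 / (complex_of_real (w j) + ?z))"
      proof -
        have "complex_of_real (c k / (w j - w k)) = complex_of_real (c k) / ((complex_of_real (w j) + ?z) - (complex_of_real (w k) + ?z))"
          by simp
        then show ?thesis using pf_step[OF 1(1) 1(2)] 2 by simp
      qed
    qed
    also have "\<dots> = (\<Sum>k\<in>K. complex_of_real (c k / (w j - w k)) / (complex_of_real (w k) + ?z))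
          - complex_of_real (\<Sum>k\<in>K. c k / (w j - w k)) / (complex_of_real (w j) + ?z)"
    proof -
      let ?d = "\<lambda>k. complex_of_real (c k / (w j - w k))"
      have "(\<Sum>k\<in>K. ?d k * (1 / (complex_of_real (w k) + ?z) - 1 / (complex_of_real (w j) + ?z)))
          = (\<Sum>k\<in>K. ?d k / (complex_of_real (w k) + ?z) - ?d k / (complex_of_real (w j) + ?z))"
        by (intro sum.cong refl) (simp add: right_diff_distrib)
      also have "\<dots> = (\<Sum>k\<in>K. ?d k / (complex_of_real (w k) + ?z)) - (\<Sum>k\<in>K. ?d k / (complex_of_real (w j) + ?z))"
        by (rule sum_subtractf)
      also have "(\<Sum>k\<in>K. ?d k / (complex_of_real (w j) + ?z)) = (\<Sum>k\<in>K. ?d k) / (complex_of_real (w j) + ?z)"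
        by (rule sum_divide_distrib[symmetric])
      also have "(\<Sum>k\<in>K. ?d k) = complex_of_real (\<Sum>k\<in>K. c k / (w j - w k))"
        by (rule of_real_sum[symmetric])
      finally show ?thesis .
    qed
    also have "\<dots> = (\<Sum>k\<in>K. complex_of_real (c' k) / (complex_of_real (w k) + ?z))
          + complex_of_real (c' j) / (complex_of_real (w j) + ?z)"
    proof -
      have "(\<Sum>k\<in>K. complex_of_real (c k / (w j - w k)) / (complex_of_real (w k) + ?z)) =
            (\<Sum>k\<in>K. complex_of_real (c' k) / (complex_of_real (w k) + ?z))"
        using insert.hyps by (intro sum.cong) (auto simp: c'_def)
      moreover have "- (complex_of_real (\<Sum>k\<in>K. c k / (w j - w k)) / (complex_of_real (w j) + ?z))
          = complex_of_real (c' j) / (complex_of_real (w j) + ?z)"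
        by (simp add: c'_def)
      ultimately show ?thesis by (simp only: diff_conv_add_uminus)
    qed
    also have "\<dots> = (\<Sum>k\<in>insert j K. complex_of_real (c' k) / (complex_of_real (w k) + ?z))"
      using insert.hyps by simp
    finally show ?thesis .
  qed
  moreover have "sum c' (insert j K) = 0"
  proof -
    have "sum c' K = (\<Sum>k\<in>K. c k / (w j - w k))"
      using insert.hyps by (intro sum.cong) (auto simp: c'_def)
    then show ?thesis using insert.hyps by (simp add: c'_def)
  qed
  ultimately show ?case by blast
qed

lemma traj_nonempty: "xs \<in> set_pmf (bingo_traj \<alpha> s N) \<Longrightarrow> xs \<noteq> []"
  by (cases N) auto

lemma traj_Suc_front:
  "bingo_traj \<alpha> s (Suc N) = bind_pmf (bingo_step \<alpha> s) (\<lambda>t. map_pmf (\<lambda>xs. xs @ [s]) (bingo_traj \<alpha> t N))"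
proof (induction N)
  case 0
  have "bingo_traj \<alpha> s (Suc 0) = map_pmf (\<lambda>t. [t, s]) (bingo_step \<alpha> s)"
    by (simp add: bind_return_pmf)
  also have "\<dots> = bind_pmf (bingo_step \<alpha> s) (\<lambda>t. return_pmf [t,s])"
    by (simp only: map_pmf_def)
  also have "\<dots> = bind_pmf (bingo_step \<alpha> s) (\<lambda>t. map_pmf (\<lambda>xs. xs @ [s]) (bingo_traj \<alpha> t 0))"
    by (simp add: map_return_pmf)
  finally show ?case .
next
  case (Suc N)
  have "bingo_traj \<alpha> s (Suc (Suc N)) = bind_pmf (bingo_traj \<alpha> s (Suc N)) (\<lambda>xs. map_pmf (\<lambda>t. t # xs) (bingo_step \<alpha> (hd xs)))"
    by (simp only: bingo_traj.simps)
  also have "\<dots> = bind_pmf (bingo_step \<alpha> s) (\<lambda>t. bind_pmf (bingo_traj \<alpha> t N)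
       (\<lambda>xs. map_pmf (\<lambda>u. u # (xs @ [s])) (bingo_step \<alpha> (hd (xs @ [s])))))"
    by (simp only: Suc bind_assoc_pmf bind_map_pmf)
  also have "\<dots> = bind_pmf (bingo_step \<alpha> s) (\<lambda>t. bind_pmf (bingo_traj \<alpha> t N)
       (\<lambda>xs. map_pmf (\<lambda>ys. ys @ [s]) (map_pmf (\<lambda>u. u # xs) (bingo_step \<alpha> (hd xs)))))"
    by (intro bind_pmf_cong refl) (auto simp: map_pmf_comp dest: traj_nonempty)
  also have "\<dots> = bind_pmf (bingo_step \<alpha> s) (\<lambda>t. map_pmf (\<lambda>xs. xs @ [s]) (bingo_traj \<alpha> t (Suc N)))"
    by (simp only: map_bind_pmf bingo_traj.simps)
  finally show ?case .
qed

definition V :: "real \<Rightarrow> nat \<times> nat \<Rightarrow> nat \<times> nat \<Rightarrow> nat \<Rightarrow> real" where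
  "V \<alpha> tgt s N = measure_pmf.prob (bingo_traj \<alpha> s N) {xs. tgt \<in> set xs}"

definition pr :: "real \<Rightarrow> nat \<Rightarrow> nat \<Rightarrow> real" where
  "pr \<alpha> i j = real i powr \<alpha> / (real i powr \<alpha> + real j powr \<alpha>)"

lemma div_le1: "(0::real) \<le> a \<Longrightarrow> 0 \<le> b \<Longrightarrow> a/(a+b) \<le> 1"
  by (cases "a+b = 0") (auto simp: divide_le_eq_1)

lemma pr_bounds: "0 \<le> pr \<alpha> i j" "pr \<alpha> i j \<le> 1"
  unfolding pr_def by (auto intro!: divide_nonneg_nonneg div_le1)

lemma V_0: "V \<alpha> tgt s 0 = (if s = tgt then 1 else 0)"
  by (simp add: V_def)

lemma V_nonneg: "0 \<le> V \<alpha> tgt s N" by (simp add: V_def)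

lemma V_Suc: "V \<alpha> tgt (i,j) (Suc N) = (if (i,j) = tgt then 1 else
    pr \<alpha> i j * V \<alpha> tgt (i+1,j) N + (1 - pr \<alpha> i j) * V \<alpha> tgt (i,j+1) N)"
proof -
  let ?E = "{xs. tgt \<in> set xs}"
  let ?p = "pr \<alpha> i j"
  let ?M = "\<lambda>b. map_pmf (\<lambda>xs. xs @ [(i,j)]) (bingo_traj \<alpha> (if b then (i + 1, j) else (i, j + 1)) N)"
  have eq: "bingo_traj \<alpha> (i,j) (Suc N) = bind_pmf (bernoulli_pmf ?p) ?M"
    by (simp only: traj_Suc_front) (simp add: bingo_step_def pr_def bind_map_pmf)
  have e1: "ennreal (V \<alpha> tgt (i,j) (Suc N)) = (\<integral>\<^sup>+b. emeasure (measure_pmf (?M b)) ?E \<partial>measure_pmf (bernoulli_pmf ?p))"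
    unfolding V_def measure_pmf.emeasure_eq_measure[symmetric] eq by (rule emeasure_bind_pmf)
  show ?thesis
  proof (cases "(i,j) = tgt")
    case True
    have "(\<lambda>xs. xs @ [(i,j)]) -` ?E = UNIV" using True by auto
    then have "emeasure (measure_pmf (?M b)) ?E = 1" for b
      by (simp only: emeasure_map_pmf) (metis measure_pmf.emeasure_space_1 space_measure_pmf)
    then have "(\<integral>\<^sup>+b. emeasure (measure_pmf (?M b)) ?E \<partial>measure_pmf (bernoulli_pmf ?p)) = (\<integral>\<^sup>+b. 1 \<partial>measure_pmf (bernoulli_pmf ?p))"
      by (intro nn_integral_cong) simp
    also have "\<dots> = 1" by (simp only: nn_integral_const measure_pmf.emeasure_space_1 mult_1)
    finally have "ennreal (V \<alpha> tgt (i,j) (Suc N)) = 1" using e1 by simp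
    then show ?thesis using True V_nonneg by (simp add: ennreal_eq_1)
  next
    case False
    have "(\<lambda>xs. xs @ [(i,j)]) -` ?E = ?E" using False by auto
    then have "emeasure (measure_pmf (?M b)) ?E = ennreal (V \<alpha> tgt (if b then (i + 1, j) else (i, j + 1)) N)" for b
      by (simp add: measure_pmf.emeasure_eq_measure V_def)
    then have "ennreal (V \<alpha> tgt (i,j) (Suc N)) = 
       ennreal (V \<alpha> tgt (i+1,j) N) * ennreal ?p + ennreal (V \<alpha> tgt (i,j+1) N) * ennreal (1 - ?p)"
      using e1 pr_bounds[of \<alpha> i j] by (simp add: nn_integral_bernoulli_pmf)
    also have "\<dots> = ennreal (?p * V \<alpha> tgt (i+1,j) N + (1 - ?p) * V \<alpha> tgt (i,j+1) N)"
    proof -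
      have p: "0 \<le> ?p" "0 \<le> 1 - ?p" using pr_bounds[of \<alpha> i j] by auto
      have "ennreal (?p * V \<alpha> tgt (i+1,j) N + (1 - ?p) * V \<alpha> tgt (i,j+1) N)
          = ennreal (?p * V \<alpha> tgt (i+1,j) N) + ennreal ((1 - ?p) * V \<alpha> tgt (i,j+1) N)"
        by (rule ennreal_plus) (use p V_nonneg in auto)
      also have "\<dots> = ennreal (V \<alpha> tgt (i+1,j) N) * ennreal ?p + ennreal (V \<alpha> tgt (i,j+1) N) * ennreal (1 - ?p)"
        using p V_nonneg by (simp only: ennreal_mult mult.commute)
      finally show ?thesis by simp
    qed
    finally have "V \<alpha> tgt (i,j) (Suc N) = ?p * V \<alpha> tgt (i+1,j) N + (1 - ?p) * V \<alpha> tgt (i,j+1) N"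
      using pr_bounds[of \<alpha> i j] V_nonneg
      by (subst (asm) ennreal_inj) (auto intro!: add_nonneg_nonneg mult_nonneg_nonneg)
    then show ?thesis using False by simp
  qed
qed

definition wt :: "real \<Rightarrow> nat \<Rightarrow> real" where "wt \<alpha> k = real k powr \<alpha>"

lemma wt_pos: "k \<ge> 1 \<Longrightarrow> wt \<alpha> k > 0" by (simp add: wt_def)

lemma wt_inj: "\<alpha> > 0 \<Longrightarrow> inj_on (wt \<alpha>) {1..}"
proof (rule inj_onI)
  fix k m assume a: "\<alpha> > 0" and km: "k \<in> {1..}" "m \<in> {1..}" "wt \<alpha> k = wt \<alpha> m"
  show "k = m"
  proof (rule ccontr)
    assume "k \<noteq> m"
    then consider "k < m" | "m < k" by linarith
    then show False
    proof cases
      case 1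
      then have "real k powr \<alpha> < real m powr \<alpha>" using a km by (intro powr_less_mono2) auto
      then show False using km by (simp add: wt_def)
    next
      case 2
      then have "real m powr \<alpha> < real k powr \<alpha>" using a km by (intro powr_less_mono2) auto
      then show False using km by (simp add: wt_def)
    qed
  qed
qed

definition hc :: "real \<Rightarrow> nat \<Rightarrow> nat \<Rightarrow> nat \<Rightarrow> real \<Rightarrow> complex" where
  "hc \<alpha> n a b t = (\<Prod>k\<in>{a..n}. complex_of_real (wt \<alpha> k) / (complex_of_real (wt \<alpha> k) - \<i> * complex_of_real t))
              * (\<Prod>k\<in>{b..n}. complex_of_real (wt \<alpha> k) / (complex_of_real (wt \<alpha> k) + \<i> * complex_of_real t))"

lemma nz_plus: "w > 0 \<Longrightarrow> complex_of_real w + \<i> * complex_of_real t \<noteq> 0"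
proof
  assume w: "w > 0" and "complex_of_real w + \<i> * complex_of_real t = 0"
  then have "Re (complex_of_real w + \<i> * complex_of_real t) = 0" by simp
  then show False using w by simp
qed

lemma nz_minus: "w > 0 \<Longrightarrow> complex_of_real w - \<i> * complex_of_real t \<noteq> 0"
  using nz_plus[of w "-t"] by simp

lemma cancel_aux: "(x::'a::field) \<noteq> 0 \<Longrightarrow> s \<noteq> 0 \<Longrightarrow> x / s * (q / x) = q / s"
  by (simp add: field_simps)

lemma hc_rec:
  assumes "1 \<le> a" "a \<le> n" "1 \<le> b" "b \<le> n"
  shows "hc \<alpha> n a b t = complex_of_real (pr \<alpha> a b) * hc \<alpha> n (a+1) b t + complex_of_real (1 - pr \<alpha> a b) * hc \<alpha> n a (b+1) t"
proof -
  define W1 where "W1 = complex_of_real (wt \<alpha> a)"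
  define W2 where "W2 = complex_of_real (wt \<alpha> b)"
  define z where "z = \<i> * complex_of_real t"
  have w1: "wt \<alpha> a > 0" and w2: "wt \<alpha> b > 0" using assms wt_pos by auto
  have n1: "W1 - z \<noteq> 0" "W2 + z \<noteq> 0" "W1 \<noteq> 0" "W2 \<noteq> 0" "W1 + W2 \<noteq> 0"
    unfolding W1_def W2_def z_def using nz_plus[OF w1] nz_minus[OF w1] nz_plus[OF w2] nz_minus[OF w2] w1 w2
    by (auto simp flip: of_real_add)
  have e1: "hc \<alpha> n a b t = W1 / (W1 - z) * hc \<alpha> n (a+1) b t"
    unfolding hc_def W1_def z_def using assms
    by (simp add: atLeastAtMost_insertL[symmetric] mult.assoc)
  have e2: "hc \<alpha> n a b t = W2 / (W2 + z) * hc \<alpha> n a (b+1) t"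
    unfolding hc_def W2_def z_def using assms
    by (simp add: atLeastAtMost_insertL[symmetric] mult_ac)
  have p: "complex_of_real (pr \<alpha> a b) = W1 / (W1 + W2)" "complex_of_real (1 - pr \<alpha> a b) = W2 / (W1 + W2)"
    unfolding pr_def W1_def W2_def wt_def using n1 unfolding W1_def W2_def wt_def
    by (simp_all add: field_simps)
  have X: "hc \<alpha> n (a+1) b t = hc \<alpha> n a b t * (W1 - z) / W1" using e1 n1 by (simp add: field_simps)
  have Y: "hc \<alpha> n a (b+1) t = hc \<alpha> n a b t * (W2 + z) / W2" using e2 n1 by (simp add: field_simps)
  have "W1 / (W1 + W2) * (hc \<alpha> n a b t * (W1 - z) / W1) = hc \<alpha> n a b t * (W1 - z) / (W1 + W2)"
    using n1 cancel_aux[of W1 "W1 + W2" "hc \<alpha> n a b t * (W1 - z)"] by simp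
  moreover have "W2 / (W1 + W2) * (hc \<alpha> n a b t * (W2 + z) / W2) = hc \<alpha> n a b t * (W2 + z) / (W1 + W2)"
    using n1 cancel_aux[of W2 "W1 + W2" "hc \<alpha> n a b t * (W2 + z)"] by simp
  moreover have "hc \<alpha> n a b t * (W1 - z) / (W1 + W2) + hc \<alpha> n a b t * (W2 + z) / (W1 + W2) = hc \<alpha> n a b t"
  proof -
    have "hc \<alpha> n a b t * (W1 - z) / (W1 + W2) + hc \<alpha> n a b t * (W2 + z) / (W1 + W2)
       = hc \<alpha> n a b t * ((W1 - z) + (W2 + z)) / (W1 + W2)" by (simp only: distrib_left add_divide_distrib)
    also have "(W1 - z) + (W2 + z) = W1 + W2" by simp
    finally show ?thesis using n1 by simp
  qed
  ultimately show ?thesis unfolding p X Y by simp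
qed

lemma norm_factor_le1: "w > 0 \<Longrightarrow> norm (complex_of_real w / (complex_of_real w + \<i> * complex_of_real t)) \<le> 1"
proof -
  assume w: "w > 0"
  have "norm (complex_of_real w + \<i> * complex_of_real t) = sqrt (w^2 + t^2)"
    by (simp add: cmod_def)
  moreover have "sqrt (w^2) \<le> sqrt (w^2 + t^2)" by simp
  then have "w \<le> sqrt (w^2 + t^2)" using w by simp
  moreover have "sqrt (w^2 + t^2) > 0" using w by (simp add: add_pos_nonneg)
  ultimately show ?thesis using w by (simp add: norm_divide divide_le_eq_1)
qed

lemma norm_factor_le1': "w > 0 \<Longrightarrow> norm (complex_of_real w / (complex_of_real w - \<i> * complex_of_real t)) \<le> 1"
  using norm_factor_le1[of w "-t"] by simp

lemma prod_norm_le1: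
  assumes "\<And>k. k \<in> K \<Longrightarrow> norm (f k :: complex) \<le> 1"
  shows "norm (prod f K) \<le> 1"
proof -
  have "norm (prod f K) \<le> (\<Prod>k\<in>K. norm (f k))" by (rule norm_prod_le)
  also have "\<dots> \<le> 1" using assms by (intro prod_le_1) auto
  finally show ?thesis .
qed

lemma pair_factor:
  assumes w: "w > 0"
  shows "complex_of_real w / (complex_of_real w - \<i> * complex_of_real t) *
         (complex_of_real w / (complex_of_real w + \<i> * complex_of_real t)) = complex_of_real (w^2 / (w^2 + t^2))"
proof -
  have "(complex_of_real w - \<i> * complex_of_real t) * (complex_of_real w + \<i> * complex_of_real t)
       = complex_of_real (w^2 + t^2)"
    by (simp add: algebra_simps power2_eq_square)
  then show ?thesis
    by (simp add: power2_eq_square)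
qed

lemma hc_bound:
  assumes "\<alpha> > 0" "1 \<le> a" "a \<le> n" "1 \<le> b" "b \<le> n"
  shows "norm (hc \<alpha> n a b t) \<le> wt \<alpha> n ^ 2 / (wt \<alpha> n ^ 2 + t^2)"
proof -
  define F where "F k = complex_of_real (wt \<alpha> k) / (complex_of_real (wt \<alpha> k) - \<i> * complex_of_real t)" for k
  define G where "G k = complex_of_real (wt \<alpha> k) / (complex_of_real (wt \<alpha> k) + \<i> * complex_of_real t)" for k
  have s1: "{a..n} = insert n {a..<n}" "{b..n} = insert n {b..<n}" using assms by auto
  have "hc \<alpha> n a b t = (F n * G n) * (prod F {a..<n} * prod G {b..<n})"
    unfolding hc_def F_def[symmetric] G_def[symmetric] s1 by (simp add: mult_ac)
  also have "F n * G n = complex_of_real (wt \<alpha> n ^ 2 / (wt \<alpha> n ^ 2 + t^2))"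
    unfolding F_def G_def using wt_pos[of n \<alpha>] assms by (intro pair_factor) auto
  finally have "norm (hc \<alpha> n a b t) = \<bar>wt \<alpha> n ^ 2 / (wt \<alpha> n ^ 2 + t^2)\<bar> * norm (prod F {a..<n} * prod G {b..<n})"
    by (simp only: norm_mult norm_of_real)
  moreover have "norm (prod F {a..<n} * prod G {b..<n}) \<le> 1"
  proof -
    have "norm (prod F {a..<n}) \<le> 1" 
      unfolding F_def using assms wt_pos by (intro prod_norm_le1 norm_factor_le1') auto
    moreover have "norm (prod G {b..<n}) \<le> 1" 
      unfolding G_def using assms wt_pos by (intro prod_norm_le1 norm_factor_le1) auto
    ultimately show ?thesis by (simp add: norm_mult mult_le_one)
  qed
  moreover have c0: "0 \<le> wt \<alpha> n ^ 2 / (wt \<alpha> n ^ 2 + t^2)" by simp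
  ultimately show ?thesis using mult_left_le[of "norm (prod F {a..<n} * prod G {b..<n})" "wt \<alpha> n ^ 2 / (wt \<alpha> n ^ 2 + t^2)"]
    by (simp only: abs_of_nonneg[OF c0])
qed

lemma hc_measurable: "(\<lambda>t. Re (hc \<alpha> n a b t)) \<in> borel_measurable lborel"
  unfolding hc_def by measurable

lemma integrable_sq: "w > 0 \<Longrightarrow> integrable lborel (\<lambda>t::real. w^2 / (w^2 + t^2))"
proof -
  assume w: "w > 0"
  have "has_bochner_integral lborel (\<lambda>t::real. w * (w / (w^2 + t^2))) (w * pi)"
    using cauchy_int_scaled[OF w] by (rule has_bochner_integral_mult_right)
  then show ?thesis by (simp add: has_bochner_integral_iff power2_eq_square)
qed

lemma hc_integrable:
  assumes "\<alpha> > 0" "1 \<le> a" "a \<le> n" "1 \<le> b" "b \<le> n"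
  shows "integrable lborel (\<lambda>t. Re (hc \<alpha> n a b t))"
proof (rule Bochner_Integration.integrable_bound[OF integrable_sq hc_measurable])
  show "wt \<alpha> n > 0" using assms wt_pos by auto
  show "AE x in lborel. norm (Re (hc \<alpha> n a b x)) \<le> norm (wt \<alpha> n ^ 2 / (wt \<alpha> n ^ 2 + x^2))"
  proof (rule AE_I2)
    fix x
    have "norm (Re (hc \<alpha> n a b x)) \<le> norm (hc \<alpha> n a b x)" by (simp add: abs_Re_le_cmod)
    also have "\<dots> \<le> wt \<alpha> n ^ 2 / (wt \<alpha> n ^ 2 + x^2)" by (rule hc_bound[OF assms])
    finally show "norm (Re (hc \<alpha> n a b x)) \<le> norm (wt \<alpha> n ^ 2 / (wt \<alpha> n ^ 2 + x^2))" by simp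
  qed
qed

lemma Re_ofreal_mult: "Re (complex_of_real r * z) = r * Re z" by simp

lemma Re_div_w: "w > 0 \<Longrightarrow> Re (complex_of_real c / (complex_of_real w + \<i> * complex_of_real u)) = c * (w / (w^2 + u^2))"
  by (simp add: Re_divide power2_eq_square)

lemma boundary_int:
  assumes "\<alpha> > 0" "finite K" "card K \<ge> 2" "\<forall>k\<in>K. k \<ge> 1" "\<sigma>^2 = 1"
  shows "has_bochner_integral lborel
    (\<lambda>t. Re (\<Prod>k\<in>K. complex_of_real (wt \<alpha> k) / (complex_of_real (wt \<alpha> k) + \<i> * complex_of_real (\<sigma> * t)))) 0"
proof -
  have Kne: "K \<noteq> {}" using assms by auto
  have inj: "inj_on (wt \<alpha>) K" by (rule inj_on_subset[OF wt_inj[OF assms(1)]]) (use assms(4) in auto)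
  have pos: "\<forall>k\<in>K. wt \<alpha> k > 0" using assms(4) wt_pos by auto
  obtain c where c: "\<And>u::real. (\<Prod>k\<in>K. 1 / (complex_of_real (wt \<alpha> k) + \<i> * u)) =
            (\<Sum>k\<in>K. complex_of_real (c k) / (complex_of_real (wt \<alpha> k) + \<i> * u))"
     and c0: "sum c K = 0"
    using pfrac[OF assms(2) Kne inj pos] assms(3) by blast
  define P where "P = (\<Prod>k\<in>K. wt \<alpha> k)"
  have eq: "Re (\<Prod>k\<in>K. complex_of_real (wt \<alpha> k) / (complex_of_real (wt \<alpha> k) + \<i> * complex_of_real (\<sigma> * t)))
      = (\<Sum>k\<in>K. P * c k * (wt \<alpha> k / ((wt \<alpha> k)^2 + t^2)))" for t
  proof -
    have "(\<Prod>k\<in>K. complex_of_real (wt \<alpha> k) / (complex_of_real (wt \<alpha> k) + \<i> * complex_of_real (\<sigma> * t)))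
       = (\<Prod>k\<in>K. complex_of_real (wt \<alpha> k) * (1 / (complex_of_real (wt \<alpha> k) + \<i> * complex_of_real (\<sigma> * t))))"
      by simp
    also have "\<dots> = complex_of_real P * (\<Prod>k\<in>K. 1 / (complex_of_real (wt \<alpha> k) + \<i> * complex_of_real (\<sigma> * t)))"
      by (simp only: prod.distrib P_def of_real_prod)
    also have "\<dots> = complex_of_real P * (\<Sum>k\<in>K. complex_of_real (c k) / (complex_of_real (wt \<alpha> k) + \<i> * complex_of_real (\<sigma> * t)))"
      by (simp only: c)
    also have "\<dots> = (\<Sum>k\<in>K. complex_of_real P * (complex_of_real (c k) / (complex_of_real (wt \<alpha> k) + \<i> * complex_of_real (\<sigma> * t))))"
      by (rule sum_distrib_left)
    finally have "Re (\<Prod>k\<in>K. complex_of_real (wt \<alpha> k) / (complex_of_real (wt \<alpha> k) + \<i> * complex_of_real (\<sigma> * t)))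
       = (\<Sum>k\<in>K. P * Re (complex_of_real (c k) / (complex_of_real (wt \<alpha> k) + \<i> * complex_of_real (\<sigma> * t))))"
      by (simp only: Re_sum Re_ofreal_mult)
    also have "\<dots> = (\<Sum>k\<in>K. P * c k * (wt \<alpha> k / ((wt \<alpha> k)^2 + t^2)))"
    proof (rule sum.cong[OF refl])
      fix k assume "k \<in> K"
      then have "Re (complex_of_real (c k) / (complex_of_real (wt \<alpha> k) + \<i> * complex_of_real (\<sigma> * t))) = c k * (wt \<alpha> k / ((wt \<alpha> k)^2 + (\<sigma> * t)^2))"
        using pos by (intro Re_div_w) auto
      also have "(\<sigma> * t)^2 = t^2" using assms(5) by (simp add: power_mult_distrib)
      finally show "P * Re (complex_of_real (c k) / (complex_of_real (wt \<alpha> k) + \<i> * complex_of_real (\<sigma> * t))) = P * c k * (wt \<alpha> k / ((wt \<alpha> k)^2 + t^2))"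
        by simp
    qed
    finally show ?thesis .
  qed
  have "has_bochner_integral lborel (\<lambda>t. \<Sum>k\<in>K. P * c k * (wt \<alpha> k / ((wt \<alpha> k)^2 + t^2))) (\<Sum>k\<in>K. P * c k * pi)"
    using pos by (intro has_bochner_integral_sum has_bochner_integral_mult_right cauchy_int_scaled) auto
  moreover have "(\<Sum>k\<in>K. P * c k * pi) = 0" using c0 by (simp add: sum_distrib_left[symmetric] sum_distrib_right[symmetric])
  ultimately show ?thesis unfolding eq by simp
qed

lemma V_zero: "i > c \<or> j > d \<Longrightarrow> V \<alpha> (c,d) (i,j) N = 0"
proof (induction N arbitrary: i j)
  case 0
  then show ?case by (auto simp: V_0)
next
  case (Suc N)
  have "V \<alpha> (c,d) (i+1,j) N = 0" "V \<alpha> (c,d) (i,j+1) N = 0" using Suc by auto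
  moreover have "(i,j) \<noteq> (c,d)" using Suc by auto
  ultimately show ?case by (simp only: V_Suc) simp
qed

lemma V_stable: "c + d \<le> i + j + N \<Longrightarrow> V \<alpha> (c,d) (i,j) (Suc N) = V \<alpha> (c,d) (i,j) N"
proof (induction N arbitrary: i j)
  case 0
  have "(i+1,j) \<noteq> (c,d)" "(i,j+1) \<noteq> (c,d)" using 0 by auto
  then show ?case by (simp only: V_Suc V_0) simp
next
  case (Suc N)
  have "V \<alpha> (c,d) (i+1,j) (Suc N) = V \<alpha> (c,d) (i+1,j) N" "V \<alpha> (c,d) (i,j+1) (Suc N) = V \<alpha> (c,d) (i,j+1) N"
    using Suc.prems by (intro Suc.IH; simp)+
  then show ?case by (simp only: V_Suc)
qed

definition H :: "real \<Rightarrow> nat \<Rightarrow> nat \<Rightarrow> nat \<Rightarrow> real" where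
  "H \<alpha> n a b = (\<integral>t. Re (hc \<alpha> n a b t) \<partial>lborel)"

lemma hc_nn: "1 \<le> n \<Longrightarrow> Re (hc \<alpha> n n n t) = wt \<alpha> n * (wt \<alpha> n / (wt \<alpha> n ^ 2 + t^2))"
proof -
  assume n: "1 \<le> n"
  have "hc \<alpha> n n n t = complex_of_real (wt \<alpha> n ^ 2 / (wt \<alpha> n ^ 2 + t^2))"
    unfolding hc_def using wt_pos[OF n]
    by (simp only: atLeastAtMost_singleton prod.insert finite.emptyI empty_iff prod.empty mult_1_right not_False_eq_True pair_factor)
  then show ?thesis by (simp add: power2_eq_square)
qed

lemma H_nn: "1 \<le> n \<Longrightarrow> H \<alpha> n n n = pi * wt \<alpha> n"
proof -
  assume n: "1 \<le> n"
  have "has_bochner_integral lborel (\<lambda>t. wt \<alpha> n * (wt \<alpha> n / (wt \<alpha> n ^ 2 + t^2))) (wt \<alpha> n * pi)"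
    using cauchy_int_scaled[OF wt_pos[OF n]] by (rule has_bochner_integral_mult_right)
  then show ?thesis unfolding H_def hc_nn[OF n] by (simp add: has_bochner_integral_iff mult.commute)
qed

lemma boundary1:
  assumes "\<alpha> > 0" "1 \<le> b" "b < n"
  shows "has_bochner_integral lborel (\<lambda>t. Re (hc \<alpha> n (n+1) b t)) 0"
proof -
  have c: "card {b..n} \<ge> 2" using assms by simp
  have "has_bochner_integral lborel
    (\<lambda>t. Re (\<Prod>k\<in>{b..n}. complex_of_real (wt \<alpha> k) / (complex_of_real (wt \<alpha> k) + \<i> * complex_of_real (1 * t)))) 0"
    using assms c by (intro boundary_int) auto
  moreover have "hc \<alpha> n (n+1) b t = (\<Prod>k\<in>{b..n}. complex_of_real (wt \<alpha> k) / (complex_of_real (wt \<alpha> k) + \<i> * complex_of_real (1 * t)))" for t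
    unfolding hc_def by simp
  ultimately show ?thesis by simp
qed

lemma boundary2:
  assumes "\<alpha> > 0" "1 \<le> a" "a < n"
  shows "has_bochner_integral lborel (\<lambda>t. Re (hc \<alpha> n a (n+1) t)) 0"
proof -
  have c: "card {a..n} \<ge> 2" using assms by simp
  have "has_bochner_integral lborel
    (\<lambda>t. Re (\<Prod>k\<in>{a..n}. complex_of_real (wt \<alpha> k) / (complex_of_real (wt \<alpha> k) + \<i> * complex_of_real (-1 * t)))) 0"
    using assms c by (intro boundary_int) auto
  moreover have "hc \<alpha> n a (n+1) t = (\<Prod>k\<in>{a..n}. complex_of_real (wt \<alpha> k) / (complex_of_real (wt \<alpha> k) + \<i> * complex_of_real (-1 * t)))" for t
    unfolding hc_def by simp
  ultimately show ?thesis by simp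
qed

lemma bingo_V: "bingo_prob \<alpha> a b c d = V \<alpha> (c,d) (a,b) (c+d)"
  by (simp add: bingo_prob_def V_def)

lemma main_identity_aux:
  assumes al: "\<alpha> > 0" and n: "1 \<le> n"
  shows "\<forall>a b. 1 \<le> a \<and> a \<le> n \<and> 1 \<le> b \<and> b \<le> n \<and> (n - a) + (n - b) = m \<longrightarrow>
      V \<alpha> (n,n) (a,b) (n+n) = H \<alpha> n a b / (pi * wt \<alpha> n)"
proof (induction m)
  case 0
  have W: "wt \<alpha> n > 0" using wt_pos[OF n] .
  have "V \<alpha> (n,n) (n,n) (Suc (n + n - 1)) = 1" by (simp only: V_Suc, simp)
  moreover have "Suc (n + n - 1) = n + n" using n by simp
  ultimately have "V \<alpha> (n,n) (n,n) (n+n) = 1" by simp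
  then show ?case using H_nn[OF n, of \<alpha>] W by auto
next
  case (Suc m)
  show ?case
  proof (intro allI impI)
    fix a b assume ab: "1 \<le> a \<and> a \<le> n \<and> 1 \<le> b \<and> b \<le> n \<and> (n - a) + (n - b) = Suc m"
    have W: "wt \<alpha> n > 0" using wt_pos[OF n] .
    define p where "p = pr \<alpha> a b"
    have ne: "(a,b) \<noteq> (n,n)" using ab by auto
    have nn: "n + n = Suc (n + n - 1)" using n by simp
    have c1: "integrable lborel (\<lambda>t. Re (hc \<alpha> n (a+1) b t)) \<and>
        V \<alpha> (n,n) (a+1,b) (n+n-1) = H \<alpha> n (a+1) b / (pi * wt \<alpha> n)"
    proof (cases "a + 1 \<le> n")
      case True
      have "V \<alpha> (n,n) (a+1,b) (n+n-1) = V \<alpha> (n,n) (a+1,b) (Suc (n+n-1))"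
        using ab by (intro V_stable[symmetric]) simp
      also have "\<dots> = V \<alpha> (n,n) (a+1,b) (n+n)" using nn by simp
      also have "\<dots> = H \<alpha> n (a+1) b / (pi * wt \<alpha> n)" using Suc.IH True ab by auto
      finally show ?thesis using hc_integrable[OF al, of "a+1" n b] True ab by auto
    next
      case False
      then have "a = n" "b < n" using ab ne by auto
      then have "has_bochner_integral lborel (\<lambda>t. Re (hc \<alpha> n (a+1) b t)) 0"
        using boundary1[OF al, of b n] ab by auto
      moreover have "V \<alpha> (n,n) (a+1,b) (n+n-1) = 0" using \<open>a = n\<close> by (intro V_zero) simp
      ultimately show ?thesis by (simp add: has_bochner_integral_iff H_def)
    qed
    have c2: "integrable lborel (\<lambda>t. Re (hc \<alpha> n a (b+1) t)) \<and>
        V \<alpha> (n,n) (a,b+1) (n+n-1) = H \<alpha> n a (b+1) / (pi * wt \<alpha> n)"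
    proof (cases "b + 1 \<le> n")
      case True
      have "V \<alpha> (n,n) (a,b+1) (n+n-1) = V \<alpha> (n,n) (a,b+1) (Suc (n+n-1))"
        using ab by (intro V_stable[symmetric]) simp
      also have "\<dots> = V \<alpha> (n,n) (a,b+1) (n+n)" using nn by simp
      also have "\<dots> = H \<alpha> n a (b+1) / (pi * wt \<alpha> n)" using Suc.IH True ab by auto
      finally show ?thesis using hc_integrable[OF al, of a n "b+1"] True ab by auto
    next
      case False
      then have "b = n" "a < n" using ab ne by auto
      then have "has_bochner_integral lborel (\<lambda>t. Re (hc \<alpha> n a (b+1) t)) 0"
        using boundary2[OF al, of a n] ab by auto
      moreover have "V \<alpha> (n,n) (a,b+1) (n+n-1) = 0" using \<open>b = n\<close> by (intro V_zero) simp
      ultimately show ?thesis by (simp add: has_bochner_integral_iff H_def)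
    qed
    have Hrec: "H \<alpha> n a b = p * H \<alpha> n (a+1) b + (1 - p) * H \<alpha> n a (b+1)"
    proof -
      have "(\<lambda>t. Re (hc \<alpha> n a b t)) = (\<lambda>t. p * Re (hc \<alpha> n (a+1) b t) + (1 - p) * Re (hc \<alpha> n a (b+1) t))"
        using hc_rec[of a n b \<alpha>] ab unfolding p_def by (auto simp: fun_eq_iff)
      then show ?thesis unfolding H_def using c1 c2 by simp
    qed
    have "V \<alpha> (n,n) (a,b) (n+n) = p * V \<alpha> (n,n) (a+1,b) (n+n-1) + (1 - p) * V \<alpha> (n,n) (a,b+1) (n+n-1)"
      using ne unfolding p_def by (subst nn) (simp only: V_Suc if_False)
    also have "\<dots> = H \<alpha> n a b / (pi * wt \<alpha> n)"
      using c1 c2 Hrec by (simp add: add_divide_distrib)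
    finally show "V \<alpha> (n,n) (a,b) (n+n) = H \<alpha> n a b / (pi * wt \<alpha> n)" .
  qed
qed

lemma main_identity:
  assumes "\<alpha> > 0" "1 \<le> a" "a \<le> n" "1 \<le> b" "b \<le> n"
  shows "bingo_prob \<alpha> a b n n = H \<alpha> n a b / (pi * wt \<alpha> n)"
  using main_identity_aux[OF assms(1), of n "(n - a) + (n - b)"] assms by (simp add: bingo_V)

lemma tele_lower:
  fixes \<beta> k :: real
  assumes b: "\<beta> > 0" and k: "k \<ge> 1"
  shows "k powr (-\<beta>) - (k+1) powr (-\<beta>) \<le> \<beta> * k powr (-\<beta>-1)"
proof -
  have "\<exists>z. k < z \<and> z < k + 1 \<and> ((k+1) powr (-\<beta>) - k powr (-\<beta>) = ((k+1) - k) * (-\<beta> * z powr (-\<beta> - 1)))"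
    using k by (intro MVT2) (auto intro!: DERIV_cong[OF has_real_derivative_powr])
  then obtain z where z: "k < z" "(k+1) powr (-\<beta>) - k powr (-\<beta>) = -\<beta> * z powr (-\<beta> - 1)" by auto
  have "z powr (-\<beta>-1) \<le> k powr (-\<beta>-1)" using z k b by (intro powr_mono2') auto
  then have "\<beta> * z powr (-\<beta>-1) \<le> \<beta> * k powr (-\<beta>-1)" using b by (intro mult_left_mono) auto
  then show ?thesis using z(2) by linarith
qed

lemma tele_upper:
  fixes \<beta> k :: real
  assumes b: "\<beta> > 0" and k: "k > 1"
  shows "\<beta> * k powr (-\<beta>-1) \<le> (k-1) powr (-\<beta>) - k powr (-\<beta>)"
proof -
  have "\<exists>z. k - 1 < z \<and> z < k \<and> (k powr (-\<beta>) - (k-1) powr (-\<beta>) = (k - (k-1)) * (-\<beta> * z powr (-\<beta> - 1)))"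
    using k by (intro MVT2) (auto intro!: DERIV_cong[OF has_real_derivative_powr])
  then obtain z where z: "k - 1 < z" "z < k" "k powr (-\<beta>) - (k-1) powr (-\<beta>) = -\<beta> * z powr (-\<beta> - 1)" by auto
  have "k powr (-\<beta>-1) \<le> z powr (-\<beta>-1)" using z k b by (intro powr_mono2') auto
  then have "\<beta> * k powr (-\<beta>-1) \<le> \<beta> * z powr (-\<beta>-1)" using b by (intro mult_left_mono) auto
  then show ?thesis using z(3) by linarith
qed

definition Tsum :: "real \<Rightarrow> nat \<Rightarrow> nat \<Rightarrow> real" where
  "Tsum \<alpha> a n = real a powr (2*\<alpha>-1) * (\<Sum>k=a..n. real k powr (-2*\<alpha>))"

lemma sum_lower:
  assumes b: "\<beta> > 0" and a: "1 \<le> a" "a \<le> n"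
  shows "real a powr (-\<beta>) - real (n+1) powr (-\<beta>) \<le> \<beta> * (\<Sum>k=a..n. real k powr (-\<beta>-1))"
proof -
  have "(\<Sum>k=a..n. real k powr (-\<beta>) - real (k+1) powr (-\<beta>)) \<le> (\<Sum>k=a..n. \<beta> * real k powr (-\<beta>-1))"
  proof (intro sum_mono)
    fix k assume "k \<in> {a..n}"
    then have "real k \<ge> 1" "real (k+1) = real k + 1" using a by auto
    then show "real k powr (-\<beta>) - real (k+1) powr (-\<beta>) \<le> \<beta> * real k powr (-\<beta>-1)"
      using tele_lower[OF b, of "real k"] by (simp add: ac_simps)
  qed
  moreover have "(\<Sum>k=a..n. real k powr (-\<beta>) - real (k+1) powr (-\<beta>)) = real a powr (-\<beta>) - real (n+1) powr (-\<beta>)"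
    using sum_Suc_diff[of a n "\<lambda>i. - (real i powr (-\<beta>))"] a by simp
  ultimately show ?thesis by (simp add: sum_distrib_left)
qed

lemma sum_upper:
  assumes b: "\<beta> > 0" and a: "2 \<le> a" "a \<le> n"
  shows "\<beta> * (\<Sum>k=a..n. real k powr (-\<beta>-1)) \<le> real (a - 1) powr (-\<beta>) - real n powr (-\<beta>)"
proof -
  have "(\<Sum>k=a..n. \<beta> * real k powr (-\<beta>-1)) \<le> (\<Sum>k=a..n. real (k-1) powr (-\<beta>) - real k powr (-\<beta>))"
  proof (intro sum_mono)
    fix k assume "k \<in> {a..n}"
    then have "real k > 1" "real (k - 1) = real k - 1" using a by auto
    then show "\<beta> * real k powr (-\<beta>-1) \<le> real (k-1) powr (-\<beta>) - real k powr (-\<beta>)"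
      using tele_upper[OF b, of "real k"] by simp
  qed
  moreover have "(\<Sum>k=a..n. real (k-1) powr (-\<beta>) - real k powr (-\<beta>)) = real (a - 1) powr (-\<beta>) - real n powr (-\<beta>)"
  proof -
    have e1: "a = Suc (a - 1)" "n = Suc (n - 1)" using a by auto
    have "(\<Sum>k=a..n. real (k-1) powr (-\<beta>) - real k powr (-\<beta>)) =
        (\<Sum>k=Suc (a-1)..Suc (n-1). real (k-1) powr (-\<beta>) - real k powr (-\<beta>))" using e1 by simp
    also have "\<dots> = (\<Sum>i=a-1..n-1. real i powr (-\<beta>) - real (Suc i) powr (-\<beta>))"
      by (subst sum.shift_bounds_cl_Suc_ivl) simp
    also have "\<dots> = real (a - 1) powr (-\<beta>) - real (Suc (n-1)) powr (-\<beta>)"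
      using sum_Suc_diff[of "a-1" "n-1" "\<lambda>i. - (real i powr (-\<beta>))"] a by simp
    also have "real (Suc (n-1)) = real n" using a by simp
    finally show ?thesis .
  qed
  ultimately show ?thesis by (simp add: sum_distrib_left)
qed

lemma T_bounds:
  assumes al: "\<alpha> > 1" and a: "2 \<le> a" "a \<le> n"
  shows "(1 - (real a / real (n+1)) powr (2*\<alpha>-1)) / (2*\<alpha>-1) \<le> Tsum \<alpha> a n"
    and "Tsum \<alpha> a n \<le> (real a / real (a-1)) powr (2*\<alpha>-1) / (2*\<alpha>-1)"
proof -
  define \<beta> where "\<beta> = 2*\<alpha>-1"
  have b: "\<beta> > 0" using al by (simp add: \<beta>_def)
  have e: "-2*\<alpha> = -\<beta>-1" by (simp add: \<beta>_def)
  have ap: "real a powr \<beta> > 0" using a by simp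
  have S: "Tsum \<alpha> a n = real a powr \<beta> * (\<Sum>k=a..n. real k powr (-\<beta>-1))"
    unfolding Tsum_def \<beta>_def[symmetric] e ..
  have "real a powr \<beta> * (real a powr (-\<beta>) - real (n+1) powr (-\<beta>)) \<le> real a powr \<beta> * (\<beta> * (\<Sum>k=a..n. real k powr (-\<beta>-1)))"
    using sum_lower[OF b, of a n] a ap by (intro mult_left_mono) auto
  moreover have "real a powr \<beta> * (real a powr (-\<beta>) - real (n+1) powr (-\<beta>)) = 1 - (real a / real (n+1)) powr \<beta>"
    using a by (simp add: right_diff_distrib powr_minus powr_mult inverse_powr divide_inverse)
  ultimately have "1 - (real a / real (n+1)) powr \<beta> \<le> \<beta> * Tsum \<alpha> a n" unfolding S by (simp add: mult_ac)
  then show "(1 - (real a / real (n+1)) powr (2*\<alpha>-1)) / (2*\<alpha>-1) \<le> Tsum \<alpha> a n"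
    using b unfolding \<beta>_def[symmetric] by (simp add: divide_le_eq mult.commute)
  have "real a powr \<beta> * (\<beta> * (\<Sum>k=a..n. real k powr (-\<beta>-1))) \<le> real a powr \<beta> * (real (a - 1) powr (-\<beta>) - real n powr (-\<beta>))"
    using sum_upper[OF b, of a n] a ap by (intro mult_left_mono) auto
  also have "\<dots> \<le> real a powr \<beta> * real (a - 1) powr (-\<beta>)"
    using ap by (intro mult_left_mono) auto
  also have "\<dots> = (real a / real (a-1)) powr \<beta>"
    by (simp add: powr_minus powr_mult inverse_powr divide_inverse)
  finally have "\<beta> * Tsum \<alpha> a n \<le> (real a / real (a-1)) powr \<beta>" unfolding S by (simp add: mult_ac)
  then show "Tsum \<alpha> a n \<le> (real a / real (a-1)) powr (2*\<alpha>-1) / (2*\<alpha>-1)"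
    using b unfolding \<beta>_def[symmetric] by (simp add: le_divide_eq mult.commute)
qed

lemma T_limit:
  assumes al: "\<alpha> > 1" and Ainf: "filterlim A at_top sequentially"
    and Ao: "(\<lambda>n. real (A n) / real n) \<longlonglongrightarrow> 0"
  shows "(\<lambda>n. Tsum \<alpha> (A n) n) \<longlonglongrightarrow> 1 / (2*\<alpha>-1)"
proof -
  define \<beta> where "\<beta> = 2*\<alpha>-1"
  have b: "\<beta> > 0" using al by (simp add: \<beta>_def)
  have ev2: "eventually (\<lambda>n. 2 \<le> A n) sequentially"
    using Ainf by (simp add: filterlim_at_top)
  have "eventually (\<lambda>n. real (A n) / real n < 1) sequentially"
    using order_tendstoD(2)[OF Ao] by simp
  then have evn: "eventually (\<lambda>n. A n \<le> n) sequentially"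
    using eventually_gt_at_top[of 0]
  proof eventually_elim
    case (elim n)
    then have "real (A n) < real n" by (simp add: divide_less_eq)
    then show ?case by simp
  qed
  have rA: "filterlim (\<lambda>n. real (A n)) at_top sequentially"
    by (rule filterlim_compose[OF filterlim_real_sequentially Ainf])
  have q0: "(\<lambda>n. real (A n) / real (n+1)) \<longlonglongrightarrow> 0"
  proof (rule tendsto_sandwich[OF _ _ tendsto_const Ao])
    show "eventually (\<lambda>n. 0 \<le> real (A n) / real (n+1)) sequentially" by simp
    show "eventually (\<lambda>n. real (A n) / real (n+1) \<le> real (A n) / real n) sequentially"
      using eventually_gt_at_top[of 0] by eventually_elim (auto intro!: divide_left_mono)
  qed
  have L: "(\<lambda>n. (1 - (real (A n) / real (n+1)) powr \<beta>) / \<beta>) \<longlonglongrightarrow> (1 - 0) / \<beta>"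
    by (intro tendsto_intros tendsto_zero_powrI[OF q0 tendsto_const] b) (use b in auto)
  have "filterlim (\<lambda>n. -1 + real (A n)) at_top sequentially"
    by (rule filterlim_tendsto_add_at_top[OF tendsto_const rA])
  then have "(\<lambda>n. inverse (-1 + real (A n))) \<longlonglongrightarrow> 0" by (rule tendsto_inverse_0_at_top)
  then have "(\<lambda>n. 1 + inverse (-1 + real (A n))) \<longlonglongrightarrow> 1 + 0" by (intro tendsto_intros)
  moreover have "eventually (\<lambda>n. 1 + inverse (-1 + real (A n)) = real (A n) / real (A n - 1)) sequentially"
    using ev2
  proof eventually_elim
    case (elim n)
    then have "real (A n - 1) = -1 + real (A n)" "-1 + real (A n) \<noteq> 0" by auto
    then show ?case by (simp add: field_simps)
  qed
  ultimately have r1: "(\<lambda>n. real (A n) / real (A n - 1)) \<longlonglongrightarrow> 1"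
    using Lim_transform_eventually by force
  have U: "(\<lambda>n. (real (A n) / real (A n - 1)) powr \<beta> / \<beta>) \<longlonglongrightarrow> 1 powr \<beta> / \<beta>"
    by (intro tendsto_intros r1) (use b in auto)
  have L': "(\<lambda>n. (1 - (real (A n) / real (n+1)) powr \<beta>) / \<beta>) \<longlonglongrightarrow> 1 / \<beta>" using L by simp
  have U': "(\<lambda>n. (real (A n) / real (A n - 1)) powr \<beta> / \<beta>) \<longlonglongrightarrow> 1 / \<beta>" using U by simp
  show ?thesis unfolding \<beta>_def[symmetric]
  proof (rule tendsto_sandwich[OF _ _ L' U'])
    show "eventually (\<lambda>n. (1 - (real (A n) / real (n+1)) powr \<beta>) / \<beta> \<le> Tsum \<alpha> (A n) n) sequentially"
      using ev2 evn by eventually_elim (use T_bounds(1)[OF al] in \<open>auto simp: \<beta>_def\<close>)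
    show "eventually (\<lambda>n. Tsum \<alpha> (A n) n \<le> (real (A n) / real (A n - 1)) powr \<beta> / \<beta>) sequentially"
      using ev2 evn by eventually_elim (use T_bounds(2)[OF al] in \<open>auto simp: \<beta>_def\<close>)
  qed
qed

definition xk :: "real \<Rightarrow> nat \<Rightarrow> nat \<Rightarrow> real \<Rightarrow> real" where
  "xk \<alpha> a k u = u^2 * real a powr (2*\<alpha>-1) * real k powr (-2*\<alpha>)"

definition gfun :: "real \<Rightarrow> nat \<Rightarrow> nat \<Rightarrow> real \<Rightarrow> real" where
  "gfun \<alpha> n a u = (\<Prod>k=a..n. 1 / (1 + xk \<alpha> a k u))"

lemma xk_nonneg: "0 \<le> xk \<alpha> a k u" by (simp add: xk_def)

lemma sum_xk: "(\<Sum>k=a..n. xk \<alpha> a k u) = u^2 * Tsum \<alpha> a n"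
  by (simp add: xk_def Tsum_def sum_distrib_left mult.assoc)

lemma xk_le:
  assumes "1 \<le> a" "a \<le> k" "\<alpha> > 0"
  shows "xk \<alpha> a k u \<le> u^2 / real a"
proof -
  have "real k powr (-2*\<alpha>) \<le> real a powr (-2*\<alpha>)" using assms by (intro powr_mono2') auto
  then have "real a powr (2*\<alpha>-1) * real k powr (-2*\<alpha>) \<le> real a powr (2*\<alpha>-1) * real a powr (-2*\<alpha>)"
    by (intro mult_left_mono) auto
  also have "\<dots> = real a powr (-1)" by (simp add: powr_add[symmetric])
  also have "\<dots> = 1 / real a" using assms by (simp add: powr_neg_one)
  finally have "real a powr (2*\<alpha>-1) * real k powr (-2*\<alpha>) \<le> 1 / real a" .
  then have "u^2 * (real a powr (2*\<alpha>-1) * real k powr (-2*\<alpha>)) \<le> u^2 * (1 / real a)"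
    by (intro mult_left_mono) auto
  then show ?thesis by (simp add: xk_def mult.assoc)
qed

lemma g_lower: "exp (- (u^2 * Tsum \<alpha> a n)) \<le> gfun \<alpha> n a u"
proof -
  have "exp (- (u^2 * Tsum \<alpha> a n)) = (\<Prod>k=a..n. exp (- xk \<alpha> a k u))"
    by (simp add: sum_xk[symmetric] exp_sum[symmetric] sum_negf)
  also have "\<dots> \<le> gfun \<alpha> n a u" unfolding gfun_def
  proof (intro prod_mono conjI)
    fix k
    have "1 + xk \<alpha> a k u \<le> exp (xk \<alpha> a k u)" by simp
    moreover have "0 < 1 + xk \<alpha> a k u" using xk_nonneg[of \<alpha> a k u] by simp
    ultimately show "exp (- xk \<alpha> a k u) \<le> 1 / (1 + xk \<alpha> a k u)"
      by (simp add: exp_minus divide_simps)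
  qed simp
  finally show ?thesis .
qed

lemma g_upper:
  assumes "1 \<le> a" "\<alpha> > 0" "u^2 / real a \<le> 1"
  shows "gfun \<alpha> n a u \<le> exp (- (u^2 * Tsum \<alpha> a n - (u^2 / real a) * (u^2 * Tsum \<alpha> a n)))"
proof -
  let ?c = "u^2 / real a"
  have "gfun \<alpha> n a u \<le> (\<Prod>k=a..n. exp (- (xk \<alpha> a k u - (xk \<alpha> a k u)^2)))" unfolding gfun_def
  proof (intro prod_mono conjI)
    fix k assume k: "k \<in> {a..n}"
    have x0: "0 \<le> xk \<alpha> a k u" by (rule xk_nonneg)
    have x1: "xk \<alpha> a k u \<le> 1" by (rule order_trans[OF xk_le[of a k \<alpha> u] assms(3)]) (use assms k in auto)
    have "xk \<alpha> a k u - (xk \<alpha> a k u)^2 \<le> ln (1 + xk \<alpha> a k u)"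
      by (rule ln_one_plus_pos_lower_bound[OF x0 x1])
    then have "exp (xk \<alpha> a k u - (xk \<alpha> a k u)^2) \<le> 1 + xk \<alpha> a k u"
      using x0 by (metis exp_le_cancel_iff exp_ln add_pos_nonneg zero_less_one)
    then have "1 / (1 + xk \<alpha> a k u) \<le> 1 / exp (xk \<alpha> a k u - (xk \<alpha> a k u)^2)"
      using x0 by (intro divide_left_mono) (auto intro!: mult_pos_pos add_pos_nonneg)
    then show "1 / (1 + xk \<alpha> a k u) \<le> exp (- (xk \<alpha> a k u - (xk \<alpha> a k u)^2))"
      by (simp only: exp_minus inverse_eq_divide)
    show "0 \<le> 1 / (1 + xk \<alpha> a k u)" using x0 by simp
  qed
  also have "\<dots> = exp (- ((\<Sum>k=a..n. xk \<alpha> a k u) - (\<Sum>k=a..n. (xk \<alpha> a k u)^2)))"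
    by (simp add: exp_sum[symmetric] sum_negf sum_subtractf)
  also have "\<dots> \<le> exp (- (u^2 * Tsum \<alpha> a n - ?c * (u^2 * Tsum \<alpha> a n)))"
  proof -
    have "(\<Sum>k=a..n. (xk \<alpha> a k u)^2) \<le> (\<Sum>k=a..n. ?c * xk \<alpha> a k u)"
    proof (intro sum_mono)
      fix k assume k: "k \<in> {a..n}"
      have "xk \<alpha> a k u * xk \<alpha> a k u \<le> ?c * xk \<alpha> a k u"
        using xk_le[of a k \<alpha> u] assms k xk_nonneg[of \<alpha> a k u] by (intro mult_right_mono) auto
      then show "(xk \<alpha> a k u)^2 \<le> ?c * xk \<alpha> a k u" by (simp add: power2_eq_square)
    qed
    moreover have "(\<Sum>k=a..n. ?c * xk \<alpha> a k u) = ?c * (u^2 * Tsum \<alpha> a n)"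
      by (simp only: sum_distrib_left[symmetric] sum_xk)
    ultimately have "(\<Sum>k=a..n. (xk \<alpha> a k u)^2) \<le> ?c * (u^2 * Tsum \<alpha> a n)" by simp
    then show ?thesis by (simp add: sum_xk)
  qed
  finally show ?thesis .
qed

lemma g_dom:
  assumes a: "1 \<le> a" "a + a \<le> n" and al: "\<alpha> > 0"
  shows "gfun \<alpha> n a u \<le> 1 / (1 + u^2 * 2 powr (-2*\<alpha>))"
proof -
  define y where "y = u^2 * real a powr (2*\<alpha>-1) * real (a+a) powr (-2*\<alpha>)"
  have y0: "0 \<le> y" by (simp add: y_def)
  have "gfun \<alpha> n a u = 1 / (\<Prod>k=a..n. 1 + xk \<alpha> a k u)"
    unfolding gfun_def by (simp add: prod_dividef)
  moreover have "1 + u^2 * 2 powr (-2*\<alpha>) \<le> (\<Prod>k=a..n. 1 + xk \<alpha> a k u)"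
  proof -
    have ay: "real a * y = u^2 * 2 powr (-2*\<alpha>)"
    proof -
      have "real (a+a) powr (-2*\<alpha>) = 2 powr (-2*\<alpha>) * real a powr (-2*\<alpha>)"
        by (simp add: powr_mult[symmetric])
      moreover have "real a * real a powr (2*\<alpha>-1) = real a powr (2*\<alpha>)"
      proof -
        have "real a powr (1 + (2*\<alpha>-1)) = real a powr 1 * real a powr (2*\<alpha>-1)" by (rule powr_add)
        then show ?thesis by simp
      qed
      moreover have "real a powr (2*\<alpha>) * real a powr (-2*\<alpha>) = 1"
        using a by (simp add: powr_add[symmetric])
      ultimately show ?thesis unfolding y_def
        by (metis (no_types, lifting) mult.assoc mult.left_commute mult.right_neutral)
    qed
    have "1 + real a * y \<le> (1 + y) ^ a"
      using Bernoulli_inequality[of y a] y0 by simp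
    also have "\<dots> = (\<Prod>k\<in>{a..<a+a}. 1 + y)" by simp
    also have "\<dots> \<le> (\<Prod>k\<in>{a..<a+a}. 1 + xk \<alpha> a k u)"
    proof (intro prod_mono conjI)
      fix k assume k: "k \<in> {a..<a+a}"
      have "real (a+a) powr (-2*\<alpha>) \<le> real k powr (-2*\<alpha>)"
        using k a al by (intro powr_mono2') auto
      then have "y \<le> xk \<alpha> a k u" unfolding y_def xk_def
        by (intro mult_left_mono) auto
      then show "1 + y \<le> 1 + xk \<alpha> a k u" by simp
    qed (use y0 in simp)
    also have "\<dots> \<le> (\<Prod>k=a..n. 1 + xk \<alpha> a k u)"
      using a by (intro prod_mono2) (auto simp: xk_nonneg add_nonneg_nonneg)
    finally show ?thesis using ay by simp
  qed
  moreover have "0 < 1 + u^2 * 2 powr (-2*\<alpha>)" by (simp add: add_pos_nonneg)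
  ultimately show ?thesis by (simp add: frac_le)
qed

lemma gauss_int: "has_bochner_integral lborel (\<lambda>x::real. exp (- (x^2))) (sqrt pi)"
proof -
  have "has_bochner_integral lborel (\<lambda>x::real. exp (- (x^2))) (2 *\<^sub>R (sqrt pi / 2))"
    by (rule has_bochner_integral_even_function[OF gaussian_moment_0]) simp
  then show ?thesis by simp
qed

lemma gauss_int_scaled:
  assumes b: "\<beta> > 0"
  shows "has_bochner_integral lborel (\<lambda>u::real. exp (- (u^2 * (1/\<beta>)))) (sqrt (pi * \<beta>))"
proof -
  define c where "c = 1 / sqrt \<beta>"
  have c: "c > 0" using b by (simp add: c_def)
  have "has_bochner_integral lborel (\<lambda>x. exp (- ((0 + c * x)^2))) (sqrt pi /\<^sub>R \<bar>c\<bar>)"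
    using lborel_has_bochner_integral_real_affine_iff[of c "\<lambda>x. exp (- (x^2))" "sqrt pi" 0] c gauss_int by simp
  moreover have "(\<lambda>x. exp (- ((0 + c * x)^2))) = (\<lambda>u::real. exp (- (u^2 * (1/\<beta>))))"
    using b by (auto simp: fun_eq_iff c_def power_mult_distrib power_divide)
  moreover have "sqrt pi /\<^sub>R \<bar>c\<bar> = sqrt (pi * \<beta>)"
    using b c by (simp add: c_def real_sqrt_mult)
  ultimately show ?thesis by simp
qed

lemma g_pointwise:
  assumes al: "\<alpha> > 1" and Ainf: "filterlim A at_top sequentially"
    and Ao: "(\<lambda>n. real (A n) / real n) \<longlonglongrightarrow> 0" and A1: "\<forall>n. A n \<ge> 1"
  shows "(\<lambda>n. gfun \<alpha> n (A n) u) \<longlonglongrightarrow> exp (- (u^2 * (1 / (2*\<alpha>-1))))"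
proof -
  have T: "(\<lambda>n. Tsum \<alpha> (A n) n) \<longlonglongrightarrow> 1 / (2*\<alpha>-1)" by (rule T_limit[OF al Ainf Ao])
  have rA: "filterlim (\<lambda>n. real (A n)) at_top sequentially"
    by (rule filterlim_compose[OF filterlim_real_sequentially Ainf])
  have c0: "(\<lambda>n. u^2 / real (A n)) \<longlonglongrightarrow> 0"
  proof -
    have "(\<lambda>n. u^2 * inverse (real (A n))) \<longlonglongrightarrow> u^2 * 0"
      by (intro tendsto_intros tendsto_inverse_0_at_top rA)
    then show ?thesis by (simp add: divide_inverse)
  qed
  have lo: "(\<lambda>n. exp (- (u^2 * Tsum \<alpha> (A n) n))) \<longlonglongrightarrow> exp (- (u^2 * (1 / (2*\<alpha>-1))))"
    by (intro tendsto_intros T)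
  have up: "(\<lambda>n. exp (- (u^2 * Tsum \<alpha> (A n) n - (u^2 / real (A n)) * (u^2 * Tsum \<alpha> (A n) n))))
      \<longlonglongrightarrow> exp (- (u^2 * (1 / (2*\<alpha>-1)) - 0 * (u^2 * (1 / (2*\<alpha>-1)))))"
    by (intro tendsto_intros T c0)
  have ev: "eventually (\<lambda>n. u^2 / real (A n) \<le> 1) sequentially"
    using order_tendstoD(2)[OF c0, of 1] by (auto elim: eventually_mono)
  show ?thesis
  proof (rule tendsto_sandwich[OF _ _ lo])
    show "eventually (\<lambda>n. exp (- (u^2 * Tsum \<alpha> (A n) n)) \<le> gfun \<alpha> n (A n) u) sequentially"
      by (intro always_eventually allI g_lower)
    show "eventually (\<lambda>n. gfun \<alpha> n (A n) u \<le> exp (- (u^2 * Tsum \<alpha> (A n) n - (u^2 / real (A n)) * (u^2 * Tsum \<alpha> (A n) n)))) sequentially"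
      using ev by eventually_elim (rule g_upper, use A1 al in auto)
    show "(\<lambda>n. exp (- (u^2 * Tsum \<alpha> (A n) n - (u^2 / real (A n)) * (u^2 * Tsum \<alpha> (A n) n)))) \<longlonglongrightarrow> exp (- (u^2 * (1 / (2*\<alpha>-1))))"
      using up by simp
  qed
qed

lemma gfun_measurable: "gfun \<alpha> n a \<in> borel_measurable lborel"
  unfolding gfun_def xk_def by measurable

lemma dom_integrable:
  fixes c :: real assumes c: "c > 0"
  shows "integrable lborel (\<lambda>u. 1 / (1 + u^2 * c))"
proof -
  define W where "W = sqrt (1/c)"
  have W: "W > 0" using c by (simp add: W_def)
  have W2: "W^2 = 1/c" using c by (simp add: W_def)
  have "has_bochner_integral lborel (\<lambda>t::real. W * (W / (W^2 + t^2))) (W * pi)"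
    using cauchy_int_scaled[OF W] by (rule has_bochner_integral_mult_right)
  moreover have "(\<lambda>t::real. W * (W / (W^2 + t^2))) = (\<lambda>u. 1 / (1 + u^2 * c))"
  proof
    fix t :: real
    have "W^2 + t^2 > 0" using W by (simp add: add_pos_nonneg)
    moreover have "1 + t^2 * c > 0" using c by (simp add: add_pos_nonneg)
    ultimately show "W * (W / (W^2 + t^2)) = 1 / (1 + t^2 * c)"
      using W W2 c by (simp add: field_simps power2_eq_square)
  qed
  ultimately show ?thesis by (simp add: has_bochner_integral_iff)
qed

lemma J_limit:
  assumes al: "\<alpha> > 1" and Ainf: "filterlim A at_top sequentially"
    and Ao: "(\<lambda>n. real (A n) / real n) \<longlonglongrightarrow> 0" and A1: "\<forall>n. A n \<ge> 1"
  shows "(\<lambda>n. \<integral>u. gfun \<alpha> n (A n) u \<partial>lborel) \<longlonglongrightarrow> sqrt (pi * (2*\<alpha>-1))"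
proof -
  have b: "2*\<alpha>-1 > 0" using al by simp
  have "eventually (\<lambda>n. real (A n) / real n < 1/2) sequentially"
    using order_tendstoD(2)[OF Ao, of "1/2"] by simp
  then have "eventually (\<lambda>n. A n + A n \<le> n) sequentially"
    using eventually_gt_at_top[of 0]
  proof eventually_elim
    case (elim n)
    then have "real (A n) < real n / 2" by (simp add: divide_less_eq)
    then show ?case by simp
  qed
  then obtain N where N: "\<And>n. n \<ge> N \<Longrightarrow> A n + A n \<le> n" by (auto simp: eventually_sequentially)
  define c :: real where "c = 2 powr (-2*\<alpha>)"
  have c: "c > 0" by (simp add: c_def)
  have "(\<lambda>i. \<integral>u. gfun \<alpha> (i+N) (A (i+N)) u \<partial>lborel) \<longlonglongrightarrow> (\<integral>u. exp (- (u^2 * (1 / (2*\<alpha>-1)))) \<partial>lborel)"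
  proof (rule integral_dominated_convergence[where w="\<lambda>u. 1 / (1 + u^2 * c)"])
    show "(\<lambda>u. exp (- (u^2 * (1 / (2*\<alpha>-1))))) \<in> borel_measurable lborel" by measurable
    show "gfun \<alpha> (i+N) (A (i+N)) \<in> borel_measurable lborel" for i by (rule gfun_measurable)
    show "integrable lborel (\<lambda>u. 1 / (1 + u^2 * c))" by (rule dom_integrable[OF c])
    show "AE u in lborel. (\<lambda>i. gfun \<alpha> (i+N) (A (i+N)) u) \<longlonglongrightarrow> exp (- (u^2 * (1 / (2*\<alpha>-1))))"
      by (intro AE_I2 LIMSEQ_ignore_initial_segment g_pointwise[OF al Ainf Ao A1])
    show "AE u in lborel. norm (gfun \<alpha> (i+N) (A (i+N)) u) \<le> 1 / (1 + u^2 * c)" for i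
    proof (intro AE_I2)
      fix u
      have g0: "0 \<le> gfun \<alpha> (i+N) (A (i+N)) u" unfolding gfun_def
        by (intro prod_nonneg) (simp add: xk_nonneg add_nonneg_pos)
      have "gfun \<alpha> (i+N) (A (i+N)) u \<le> 1 / (1 + u^2 * c)"
        unfolding c_def using A1 N[of "i+N"] al by (intro g_dom) auto
      then show "norm (gfun \<alpha> (i+N) (A (i+N)) u) \<le> 1 / (1 + u^2 * c)" using g0 by simp
    qed
  qed
  also have "(\<integral>u. exp (- (u^2 * (1 / (2*\<alpha>-1)))) \<partial>lborel) = sqrt (pi * (2*\<alpha>-1))"
    using gauss_int_scaled[OF b] by (simp add: has_bochner_integral_iff)
  finally show ?thesis by (rule LIMSEQ_offset)
qed

lemma hc_diag:
  assumes "1 \<le> a"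
  shows "Re (hc \<alpha> n a a t) = (\<Prod>k=a..n. wt \<alpha> k ^ 2 / (wt \<alpha> k ^ 2 + t^2))"
proof -
  have "hc \<alpha> n a a t = (\<Prod>k=a..n. complex_of_real (wt \<alpha> k) / (complex_of_real (wt \<alpha> k) - \<i> * complex_of_real t) *
      (complex_of_real (wt \<alpha> k) / (complex_of_real (wt \<alpha> k) + \<i> * complex_of_real t)))"
    unfolding hc_def by (rule prod.distrib[symmetric])
  also have "\<dots> = (\<Prod>k=a..n. complex_of_real (wt \<alpha> k ^ 2 / (wt \<alpha> k ^ 2 + t^2)))"
    using assms by (intro prod.cong refl pair_factor wt_pos) auto
  also have "\<dots> = complex_of_real (\<Prod>k=a..n. wt \<alpha> k ^ 2 / (wt \<alpha> k ^ 2 + t^2))"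
    by (rule of_real_prod[symmetric])
  finally have eq: "hc \<alpha> n a a t = complex_of_real (\<Prod>k=a..n. wt \<alpha> k ^ 2 / (wt \<alpha> k ^ 2 + t^2))" .
  show ?thesis by (simp only: eq Re_complex_of_real)
qed

lemma factor_eq:
  assumes "1 \<le> k"
  shows "wt \<alpha> k ^ 2 / (wt \<alpha> k ^ 2 + (0 + real a powr ((2*\<alpha>-1)/2) * u)^2) = 1 / (1 + xk \<alpha> a k u)"
proof -
  define P where "P = real k powr (2*\<alpha>)"
  define Q where "Q = real a powr (2*\<alpha>-1)"
  have P: "P > 0" using assms by (simp add: P_def)
  have Q: "Q \<ge> 0" by (simp add: Q_def)
  have w2: "wt \<alpha> k ^ 2 = P" unfolding wt_def P_def using assms by (simp add: powr_power mult.commute)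
  have s2: "(0 + real a powr ((2*\<alpha>-1)/2) * u)^2 = Q * u^2"
  proof (cases "a = 0")
    case True then show ?thesis by (simp add: Q_def)
  next
    case False
    then have "(real a powr ((2*\<alpha>-1)/2))^2 = real a powr (of_nat 2 * ((2*\<alpha>-1)/2))"
      by (intro powr_power) simp
    also have "of_nat 2 * ((2*\<alpha>-1)/2) = 2*\<alpha>-1" by simp
    finally have "(real a powr ((2*\<alpha>-1)/2))^2 = Q" by (simp only: Q_def)
    then show ?thesis by (simp add: power_mult_distrib)
  qed
  have x: "xk \<alpha> a k u = u^2 * Q / P"
    unfolding xk_def Q_def P_def by (simp add: powr_minus divide_inverse)
  have "P + Q * u^2 > 0" using P Q by (simp add: add_pos_nonneg)
  then show ?thesis unfolding w2 s2 x using P by (simp add: field_simps)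
qed

lemma H_diag:
  assumes "1 \<le> a"
  shows "H \<alpha> n a a = real a powr ((2*\<alpha>-1)/2) * (\<integral>u. gfun \<alpha> n a u \<partial>lborel)"
proof -
  define s where "s = real a powr ((2*\<alpha>-1)/2)"
  have s: "s > 0" using assms by (simp add: s_def)
  have "H \<alpha> n a a = (\<integral>t. (\<Prod>k=a..n. wt \<alpha> k ^ 2 / (wt \<alpha> k ^ 2 + t^2)) \<partial>lborel)"
    unfolding H_def using hc_diag[OF assms] by simp
  also have "\<dots> = \<bar>s\<bar> *\<^sub>R (\<integral>u. (\<Prod>k=a..n. wt \<alpha> k ^ 2 / (wt \<alpha> k ^ 2 + (0 + s * u)^2)) \<partial>lborel)"
    using s by (intro lborel_integral_real_affine) simp
  also have "(\<lambda>u. (\<Prod>k=a..n. wt \<alpha> k ^ 2 / (wt \<alpha> k ^ 2 + (0 + s * u)^2))) = gfun \<alpha> n a"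
    unfolding gfun_def s_def using assms by (intro ext prod.cong refl factor_eq) auto
  finally show ?thesis using s by (simp add: s_def)
qed

theorem mainTheorem8:
  fixes \<alpha> :: real and A :: "nat \<Rightarrow> nat"
  assumes "\<alpha> > 1"
    and "\<forall>n. A n > 0"
    and "filterlim A at_top sequentially"
    and "(\<lambda>n. real (A n)) \<in> o(\<lambda>n. real n)"
  shows "(\<lambda>n. bingo_prob \<alpha> (A n) (A n) n n) \<sim>[sequentially]
           (\<lambda>n. sqrt ((2 * \<alpha> - 1) / pi) * real (A n) powr ((2 * \<alpha> - 1) / 2)
                 * real n powr (- \<alpha>))"
proof -
  note al = assms(1)
  have A1: "\<forall>n. A n \<ge> 1" using assms(2) by (simp add: Suc_le_eq)
  have Ao: "(\<lambda>n. real (A n) / real n) \<longlonglongrightarrow> 0" using smalloD_tendsto[OF assms(4)] by simp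
  define \<beta> where "\<beta> = 2*\<alpha>-1"
  have b: "\<beta> > 0" using al by (simp add: \<beta>_def)
  define J where "J n = (\<integral>u. gfun \<alpha> n (A n) u \<partial>lborel)" for n
  have J: "J \<longlonglongrightarrow> sqrt (pi * \<beta>)" unfolding J_def \<beta>_def by (rule J_limit[OF al assms(3) Ao A1])
  have "eventually (\<lambda>n. real (A n) / real n < 1) sequentially"
    using order_tendstoD(2)[OF Ao] by simp
  then have ev: "eventually (\<lambda>n. A n \<le> n \<and> 1 \<le> n) sequentially"
    using eventually_gt_at_top[of 0]
  proof eventually_elim
    case (elim n)
    then have "real (A n) < real n" by (simp add: divide_less_eq)
    then show ?case using elim by simp
  qed
  have ratio: "eventually (\<lambda>n. J n / sqrt (pi * \<beta>) = bingo_prob \<alpha> (A n) (A n) n n /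
      (sqrt ((2 * \<alpha> - 1) / pi) * real (A n) powr ((2 * \<alpha> - 1) / 2) * real n powr (- \<alpha>))) sequentially"
    using ev
  proof eventually_elim
    case (elim n)
    have An: "1 \<le> A n" using A1 by blast
    define s where "s = real (A n) powr ((2*\<alpha>-1)/2)"
    define W where "W = wt \<alpha> n"
    have s: "s > 0" using An by (simp add: s_def)
    have W: "W > 0" using elim by (simp add: W_def wt_def)
    have Wn: "real n powr (- \<alpha>) = 1 / W" by (simp add: W_def wt_def powr_minus divide_inverse)
    have "bingo_prob \<alpha> (A n) (A n) n n = H \<alpha> n (A n) (A n) / (pi * W)"
      unfolding W_def using al An elim by (intro main_identity) auto
    also have "\<dots> = s * J n / (pi * W)" unfolding J_def s_def using H_diag[OF An] by simp
    finally have bp: "bingo_prob \<alpha> (A n) (A n) n n = s * J n / (pi * W)" .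
    have sq: "pi * sqrt (\<beta> / pi) = sqrt (pi * \<beta>)"
    proof -
      have "pi * sqrt (\<beta> / pi) = sqrt (pi^2) * sqrt (\<beta> / pi)" by simp
      also have "\<dots> = sqrt (pi^2 * (\<beta> / pi))" by (simp only: real_sqrt_mult)
      also have "pi^2 * (\<beta> / pi) = pi * \<beta>" by (simp add: power2_eq_square)
      finally show ?thesis .
    qed
    have "bingo_prob \<alpha> (A n) (A n) n n / (sqrt (\<beta> / pi) * s * (1 / W)) = J n / (pi * sqrt (\<beta> / pi))"
      unfolding bp using s W b by (simp add: field_simps)
    then have "bingo_prob \<alpha> (A n) (A n) n n / (sqrt (\<beta> / pi) * s * (1 / W)) = J n / sqrt (pi * \<beta>)"
      unfolding sq .
    then show ?case unfolding Wn s_def \<beta>_def by (rule sym)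
  qed
  have "(\<lambda>n. J n / sqrt (pi * \<beta>)) \<longlonglongrightarrow> sqrt (pi * \<beta>) / sqrt (pi * \<beta>)"
    by (intro tendsto_intros J) (use b in simp)
  then have "(\<lambda>n. J n / sqrt (pi * \<beta>)) \<longlonglongrightarrow> 1" using b by simp
  then have "(\<lambda>n. bingo_prob \<alpha> (A n) (A n) n n /
      (sqrt ((2 * \<alpha> - 1) / pi) * real (A n) powr ((2 * \<alpha> - 1) / 2) * real n powr (- \<alpha>))) \<longlonglongrightarrow> 1"
    using ratio by (rule Lim_transform_eventually)
  then show ?thesis by (rule asymp_equivI')
qed

end
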